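(* There exists a game $\mathcal G=(G,\Pi,T,s_0)$ and a collective strategy $\bar\tau_\Pi$ such that $$\inf_{\sigma_{\mathsf O}\ \text{memoryless}}\mathbb P_{(\bar\tau_\Pi,\sigma_{\mathsf O})}(\text{reach }T)\;>\;\sup_{\bar\sigma_\Pi\ \text{memoryless}}\ \inf_{\sigma_{\mathsf O}\ \text{memoryless}}\mathbb P_{(\bar\sigma_\Pi,\sigma_{\mathsf O})}(\text{reach }T),$$ i.e. against an opponent restricted to memoryless strategies, the team can achieve a strictly higher guaranteed probability of reaching the target with a strategy using memory than with any memoryless collective strategy.
   Context: A game structure is $G=(\Sigma,S,(A_p)_{p\in\Sigma},(\mathsf{Av}_p)_{p\in\Sigma},\delta)$ with players $\Sigma$, a finite set $S$ of states, finite action sets $A_p$, nonempty available-action sets $\mathsf{Av}_p(s)\subseteq A_p$, and a transition function $\delta$ mapping a state and an available action profile to a probability distribution on $S$. A game is $(G,\Pi,T,s_0)$ with team $\Pi\subseteq\Sigma$, absorbing target set $T\subseteq S$, initial state $s_0$; $\Sigma\setminus\Pi=\{\mathsf O\}$ (the opponent). A strategy for $p$ maps each history (nonempty finite sequence of states) ending in $s$ to a distribution over $\mathsf{Av}_p(s)$; memoryless means it depends only on the last state. A collective strategy is a tuple of strategies of the team players, who randomise independently (joint action probability is the product of the individual probabilities). A complete strategy profile induces a probability measure $\mathbb P$ on plays from $s_0$; "reach $T$" is the event that the play visits $T$. *)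

theory Defs
  imports "HOL-Probability.Probability"
begin

text \<open>Players, states and actions are encoded as natural numbers
  (sufficient, since the theorem is existential). An action profile is a function
  from players to actions; outside the player set it takes the default value 0.\<close>

record game_structure =
  players :: "nat set"
  states  :: "nat set"
  acts    :: "nat \<Rightarrow> nat set"
  avail   :: "nat \<Rightarrow> nat \<Rightarrow> nat set"
  trans   :: "nat \<Rightarrow> (nat \<Rightarrow> nat) \<Rightarrow> nat pmf"

definition avail_profile :: "game_structure \<Rightarrow> nat \<Rightarrow> (nat \<Rightarrow> nat) \<Rightarrow> bool" where
  "avail_profile G s a \<longleftrightarrow> (\<forall>p\<in>players G. a p \<in> avail G p s) \<and> (\<forall>p. p \<notin> players G \<longrightarrow> a p = 0)"

definition wf_game :: "game_structure \<Rightarrow> nat set \<Rightarrow> nat set \<Rightarrow> nat \<Rightarrow> bool" where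
  "wf_game G Team T s0 \<longleftrightarrow>
     finite (players G) \<and> finite (states G) \<and>
     (\<forall>p\<in>players G. finite (acts G p)) \<and>
     (\<forall>p\<in>players G. \<forall>s\<in>states G. avail G p s \<noteq> {} \<and> avail G p s \<subseteq> acts G p) \<and>
     (\<forall>s\<in>states G. \<forall>a. avail_profile G s a \<longrightarrow> set_pmf (trans G s a) \<subseteq> states G) \<and>
     Team \<subseteq> players G \<and> (\<exists>opp. players G - Team = {opp}) \<and>
     T \<subseteq> states G \<and>
     (\<forall>t\<in>T. \<forall>a. avail_profile G t a \<longrightarrow> trans G t a = return_pmf t) \<and>
     s0 \<in> states G"

definition opponent :: "game_structure \<Rightarrow> nat set \<Rightarrow> nat" where
  "opponent G Team = the_elem (players G - Team)"

definition history :: "game_structure \<Rightarrow> nat list \<Rightarrow> bool" where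
  "history G h \<longleftrightarrow> h \<noteq> [] \<and> set h \<subseteq> states G"

definition is_strategy :: "game_structure \<Rightarrow> nat \<Rightarrow> (nat list \<Rightarrow> nat pmf) \<Rightarrow> bool" where
  "is_strategy G p \<sigma> \<longleftrightarrow> (\<forall>h. history G h \<longrightarrow> set_pmf (\<sigma> h) \<subseteq> avail G p (last h))"

definition memoryless :: "game_structure \<Rightarrow> (nat list \<Rightarrow> nat pmf) \<Rightarrow> bool" where
  "memoryless G \<sigma> \<longleftrightarrow>
     (\<forall>h h'. history G h \<longrightarrow> history G h' \<longrightarrow> last h = last h' \<longrightarrow> \<sigma> h = \<sigma> h')"

definition memoryless_strategy :: "game_structure \<Rightarrow> nat \<Rightarrow> (nat list \<Rightarrow> nat pmf) \<Rightarrow> bool" where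
  "memoryless_strategy G p \<sigma> \<longleftrightarrow> is_strategy G p \<sigma> \<and> memoryless G \<sigma>"

definition collective_strategy :: "game_structure \<Rightarrow> nat set \<Rightarrow> (nat \<Rightarrow> nat list \<Rightarrow> nat pmf) \<Rightarrow> bool" where
  "collective_strategy G Team \<tau> \<longleftrightarrow> (\<forall>p\<in>Team. is_strategy G p (\<tau> p))"

definition memoryless_collective :: "game_structure \<Rightarrow> nat set \<Rightarrow> (nat \<Rightarrow> nat list \<Rightarrow> nat pmf) \<Rightarrow> bool" where
  "memoryless_collective G Team \<tau> \<longleftrightarrow> (\<forall>p\<in>Team. memoryless_strategy G p (\<tau> p))"

definition next_dist :: "game_structure \<Rightarrow> (nat \<Rightarrow> nat list \<Rightarrow> nat pmf) \<Rightarrow> nat list \<Rightarrow> nat pmf" where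
  "next_dist G \<sigma> h = bind_pmf (Pi_pmf (players G) 0 (\<lambda>p. \<sigma> p h)) (\<lambda>a. trans G (last h) a)"

text \<open>Probability that, continuing from history h, the play visits T within n further steps
  (counting the current state).\<close>
primrec reach_within :: "game_structure \<Rightarrow> nat set \<Rightarrow> (nat \<Rightarrow> nat list \<Rightarrow> nat pmf) \<Rightarrow> nat \<Rightarrow> nat list \<Rightarrow> real" where
  "reach_within G T \<sigma> 0 h = (if last h \<in> T then 1 else 0)"
| "reach_within G T \<sigma> (Suc n) h =
     (if last h \<in> T then 1
      else measure_pmf.expectation (next_dist G \<sigma> h) (\<lambda>s. reach_within G T \<sigma> n (h @ [s])))"

text \<open>P(reach T) from s0: by continuity of measure, the limit (supremum) of the
  probabilities of reaching T within n steps.\<close>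
definition reach_prob :: "game_structure \<Rightarrow> nat set \<Rightarrow> (nat \<Rightarrow> nat list \<Rightarrow> nat pmf) \<Rightarrow> nat \<Rightarrow> real" where
  "reach_prob G T \<sigma> s0 = (SUP n. reach_within G T \<sigma> n [s0])"

end

theory Submission imports Defs begin

definition G0 :: game_structure where
  "G0 = \<lparr>players = {0,1,2}, states = {0,1,2,3,4}, acts = (\<lambda>p. {0,1}),
     avail = (\<lambda>p s. {0,1}),
     trans = (\<lambda>s a. if s = 0 then pmf_of_set {1,2} else if s = 1 then return_pmf 2
        else if s = 2 then return_pmf (if a 0 = a 1 \<and> a 0 \<noteq> a 2 then 3 else 4) else return_pmf s)\<rparr>"

lemma G0_simps[simp]: "players G0 = {0,1,2}" "states G0 = {0,1,2,3,4}" "acts G0 p = {0,1}"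
  "avail G0 p s = {0,1}" "trans G0 = (\<lambda>s a. if s = 0 then pmf_of_set {1,2} else if s = 1 then return_pmf 2
        else if s = 2 then return_pmf (if a 0 = a 1 \<and> a 0 \<noteq> a 2 then 3 else 4) else return_pmf s)"
  "trans G0 s a = (if s = 0 then pmf_of_set {1,2} else if s = 1 then return_pmf 2
        else if s = 2 then return_pmf (if a 0 = a 1 \<and> a 0 \<noteq> a 2 then 3 else 4) else return_pmf s)"
  by (simp_all add: G0_def)

lemma rw3: "last h = 3 \<Longrightarrow> reach_within G0 {3} \<sigma> n h = 1"
  by (cases n) simp_all

lemma nd_const: "last h \<noteq> 0 \<Longrightarrow> last h \<noteq> 2 \<Longrightarrow> next_dist G0 \<sigma> h = return_pmf (if last h = 1 then 2 else last h)"
  unfolding next_dist_def by (simp add: bind_pmf_const)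

lemma rw4: "last h = 4 \<Longrightarrow> reach_within G0 {3} \<sigma> n h = 0"
proof (induction n arbitrary: h)
  case 0 then show ?case by simp
next
  case (Suc n) then show ?case by (simp add: nd_const)
qed

lemma rw1: "last h = 1 \<Longrightarrow> reach_within G0 {3} \<sigma> (Suc n) h = reach_within G0 {3} \<sigma> n (h @ [2])"
  by (simp add: nd_const)

lemma exp12: "measure_pmf.expectation (pmf_of_set {1::nat,2}) (f::nat\<Rightarrow>real) = (f 1 + f 2) / 2"
  by (subst integral_pmf_of_set) auto

lemma rw0: "last h = 0 \<Longrightarrow> reach_within G0 {3} \<sigma> (Suc n) h =
   (reach_within G0 {3} \<sigma> n (h @ [1]) + reach_within G0 {3} \<sigma> n (h @ [2])) / 2"
  unfolding reach_within.simps next_dist_def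
  using exp12[of "\<lambda>s. reach_within G0 {3} \<sigma> n (h @ [s])"] by simp

lemma rw2: "last h = 2 \<Longrightarrow> reach_within G0 {3} \<sigma> (Suc n) h =
   measure_pmf.prob (Pi_pmf {0,1,2} 0 (\<lambda>p. \<sigma> p h)) {a. a 0 = a 1 \<and> a 0 \<noteq> a 2}"
proof -
  assume l: "last h = 2"
  let ?X = "Pi_pmf {0,1,2} 0 (\<lambda>p. \<sigma> p h)"
  have "next_dist G0 \<sigma> h = map_pmf (\<lambda>a. if a 0 = a 1 \<and> a 0 \<noteq> a 2 then 3 else 4) ?X"
    unfolding next_dist_def map_pmf_def using l by simp
  then have "reach_within G0 {3} \<sigma> (Suc n) h = measure_pmf.expectation ?X
     (\<lambda>a. reach_within G0 {3} \<sigma> n (h @ [if a 0 = a 1 \<and> a 0 \<noteq> a 2 then 3 else 4]))"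
    using l by simp
  also have "\<dots> = measure_pmf.expectation ?X (indicator {a. a 0 = a 1 \<and> a 0 \<noteq> a 2})"
    by (rule Bochner_Integration.integral_cong) (auto simp: rw3 rw4 indicator_def)
  also have "\<dots> = measure_pmf.prob ?X {a. a 0 = a 1 \<and> a 0 \<noteq> a 2}"
    by simp
  finally show ?thesis .
qed

lemma rw_bounds: "0 \<le> reach_within G T \<sigma> n h \<and> reach_within G T \<sigma> n h \<le> 1"
proof (induction n arbitrary: h)
  case 0 then show ?case by simp
next
  case (Suc n)
  show ?case
  proof (cases "last h \<in> T")
    case False
    have int: "integrable (measure_pmf (next_dist G \<sigma> h)) (\<lambda>s. reach_within G T \<sigma> n (h @ [s]))"
      by (rule measure_pmf.integrable_const_bound[where B=1]) (use Suc in auto)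
    have "0 \<le> measure_pmf.expectation (next_dist G \<sigma> h) (\<lambda>s. reach_within G T \<sigma> n (h @ [s]))"
      by (rule Bochner_Integration.integral_nonneg) (use Suc in auto)
    moreover have "measure_pmf.expectation (next_dist G \<sigma> h) (\<lambda>s. reach_within G T \<sigma> n (h @ [s])) \<le> 1"
      by (rule measure_pmf.integral_le_const[OF int]) (use Suc in auto)
    ultimately show ?thesis using False by simp
  qed simp
qed

lemma pmf01: "set_pmf p \<subseteq> {0::nat,1} \<Longrightarrow> pmf p 1 = 1 - pmf p 0"
  using sum_pmf_eq_1[of "{0::nat,1}" p] by simp

lemma pc: "measure_pmf.prob p (-{c}) = 1 - pmf p c"
  using measure_pmf.prob_compl[of "{c}" p] by (simp add: Compl_eq_Diff_UNIV measure_pmf_single)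

abbreviation "cond \<equiv> {a::nat\<Rightarrow>nat. a 0 = a 1 \<and> a 0 \<noteq> a 2}"

lemma supp_Pi: "a \<in> set_pmf (Pi_pmf {0::nat,1,2} (0::nat) Q) \<Longrightarrow> a i \<in> set_pmf (Q i) \<and> i \<in> {0,1,2} \<or> i \<notin> {0,1,2} \<and> a i = 0"
proof -
  assume "a \<in> set_pmf (Pi_pmf {0::nat,1,2} (0::nat) Q)"
  then have "a \<in> PiE_dflt {0::nat,1,2} (0::nat) (set_pmf \<circ> Q)" by (simp add: set_Pi_pmf)
  then show ?thesis unfolding PiE_dflt_def by (cases "i \<in> {0,1,2}") auto
qed

lemma prob_det:
  assumes "Q 0 = return_pmf t" "Q 1 = return_pmf t"
  shows "measure_pmf.prob (Pi_pmf {0::nat,1,2} 0 Q) cond = measure_pmf.prob (Q 2) (-{t})"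
proof -
  let ?X = "Pi_pmf {0::nat,1,2} 0 Q"
  have "measure_pmf.prob ?X cond = measure_pmf.prob ?X (cond \<inter> set_pmf ?X)"
    by (simp add: measure_Int_set_pmf)
  also have "cond \<inter> set_pmf ?X = {a. a 2 \<noteq> t} \<inter> set_pmf ?X"
  proof (rule set_eqI)
    fix a show "a \<in> cond \<inter> set_pmf ?X \<longleftrightarrow> a \<in> {a. a 2 \<noteq> t} \<inter> set_pmf ?X"
    proof (cases "a \<in> set_pmf ?X")
      case True
      then have "a 0 = t" "a 1 = t" using supp_Pi[of a Q 0] supp_Pi[of a Q 1] assms by auto
      then show ?thesis by auto
    qed simp
  qed
  also have "measure_pmf.prob ?X \<dots> = measure_pmf.prob ?X {a. a 2 \<noteq> t}"
    by (simp add: measure_Int_set_pmf)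
  also have "\<dots> = measure_pmf.prob (map_pmf (\<lambda>a. a 2) ?X) (-{t})"
    by (simp add: vimage_def Compl_eq)
  also have "map_pmf (\<lambda>a. a 2) ?X = Q 2"
    by (subst Pi_pmf_component) auto
  finally show ?thesis .
qed

lemma prob_bound:
  assumes "Q 2 = return_pmf c"
  shows "measure_pmf.prob (Pi_pmf {0::nat,1,2} 0 Q) cond \<le> (1 - pmf (Q 0) c) * (1 - pmf (Q 1) c)"
proof -
  let ?X = "Pi_pmf {0::nat,1,2} 0 Q"
  let ?B = "\<lambda>i::nat. if i = 2 then UNIV else - {c}"
  have "measure_pmf.prob ?X cond = measure_pmf.prob ?X (cond \<inter> set_pmf ?X)"
    by (simp add: measure_Int_set_pmf)
  also have "\<dots> \<le> measure_pmf.prob ?X (PiE_dflt {0,1,2} 0 ?B)"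
  proof (rule measure_pmf.finite_measure_mono)
    show "cond \<inter> set_pmf ?X \<subseteq> PiE_dflt {0,1,2} 0 ?B"
    proof
      fix a assume a: "a \<in> cond \<inter> set_pmf ?X"
      then have "a 2 = c" using supp_Pi[of a Q 2] assms by auto
      have a1: "a 1 \<noteq> c" "a 0 \<noteq> c" using a \<open>a 2 = c\<close> by auto
      have "a x = 0" if "x \<notin> {0,1,2}" for x using supp_Pi[of a Q x] a that by blast
      then show "a \<in> PiE_dflt {0,1,2} 0 ?B" using a1 by (auto simp: PiE_dflt_def)
    qed
  qed simp
  also have "\<dots> = (\<Prod>x\<in>{0,1,2}. measure_pmf.prob (Q x) (?B x))"
    by (rule measure_Pi_pmf_PiE_dflt) simp
  also have "\<dots> = (1 - pmf (Q 0) c) * (1 - pmf (Q 1) c)"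
    by (simp add: pc)
  finally show ?thesis .
qed

lemma rw_from0:
  assumes "\<And>h. history G0 h \<Longrightarrow> last h = 2 \<Longrightarrow> measure_pmf.prob (Pi_pmf {0::nat,1,2} 0 (\<lambda>p. \<sigma> p h)) cond \<le> b"
    and "0 \<le> b"
  shows "reach_within G0 {3} \<sigma> n [0] \<le> b"
proof -
  have h2: "reach_within G0 {3} \<sigma> m h \<le> b" if "history G0 h" "last h = 2" for m h
  proof (cases m)
    case 0 then show ?thesis using that assms by simp
  next
    case (Suc k) show ?thesis unfolding Suc rw2[OF that(2)] using assms(1)[OF that] .
  qed
  have h1: "reach_within G0 {3} \<sigma> m [0,1] \<le> b" for m
  proof (cases m)
    case 0 then show ?thesis using assms by simp
  next
    case (Suc k)
    have e: "reach_within G0 {3} \<sigma> (Suc k) [0,1] = reach_within G0 {3} \<sigma> k ([0,1] @ [2])" by (rule rw1) simp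
    show ?thesis unfolding Suc e
      using h2[of "[0,1,2]" k] by (simp add: history_def)
  qed
  show ?thesis
  proof (cases n)
    case 0 then show ?thesis using assms by simp
  next
    case (Suc k)
    have "reach_within G0 {3} \<sigma> k [0,2] \<le> b"
      using h2[of "[0,2]" k] by (simp add: history_def)
    moreover have e: "reach_within G0 {3} \<sigma> (Suc k) [0] = (reach_within G0 {3} \<sigma> k ([0] @ [1]) + reach_within G0 {3} \<sigma> k ([0] @ [2])) / 2" by (rule rw0) simp
    ultimately show ?thesis unfolding Suc e using h1[of k] by simp
  qed
qed

lemma opp: "opponent G0 {0,1} = 2"
proof -
  have "players G0 - {0,1} = {2}" by auto
  then show ?thesis unfolding opponent_def by simp
qed

lemma wf: "wf_game G0 {0,1} {3} 0"
  unfolding wf_game_def by (auto simp: set_pmf_of_set)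

definition tm :: "nat \<Rightarrow> nat list \<Rightarrow> nat pmf" where
  "tm p h = return_pmf (if length h = 3 then 1 else 0)"

lemma coll: "collective_strategy G0 {0,1} tm"
  unfolding collective_strategy_def is_strategy_def tm_def by auto

lemma bdd_rw: "bdd_above (range (\<lambda>n. reach_within G T \<sigma> n h))"
  using rw_bounds by (intro bdd_aboveI[where M=1]) blast

lemma rp_ge: "reach_within G T \<sigma> n [s0] \<le> reach_prob G T \<sigma> s0"
  unfolding reach_prob_def by (rule cSUP_upper[OF _ bdd_rw]) simp

lemma rp_nonneg: "0 \<le> reach_prob G T \<sigma> s0"
  using rp_ge[of G T \<sigma> 0 s0] rw_bounds[of G T \<sigma> 0 "[s0]"] by linarith

lemma pmf_sum_le: "pmf d (0::nat) + pmf d 1 \<le> 1"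
proof -
  have "pmf d 0 + pmf d 1 = measure_pmf.prob d {0,1}"
    by (simp add: measure_measure_pmf_finite)
  then show ?thesis using measure_pmf.prob_le_1[of d "{0,1}"] by simp
qed

lemma lhs:
  assumes "memoryless_strategy G0 2 \<sigma>O"
  shows "1/2 \<le> reach_prob G0 {3} (tm(2 := \<sigma>O)) 0"
proof -
  let ?P = "tm(2 := \<sigma>O)"
  have m: "\<sigma>O [0,1,2] = \<sigma>O [0,2]"
    using assms unfolding memoryless_strategy_def memoryless_def history_def by simp
  have e1: "reach_within G0 {3} ?P (Suc (Suc (Suc 0))) [0] = (reach_within G0 {3} ?P (Suc (Suc 0)) [0,1] + reach_within G0 {3} ?P (Suc (Suc 0)) [0,2]) / 2"
    by (subst rw0) (simp_all del: reach_within.simps)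
  have e2: "reach_within G0 {3} ?P (Suc (Suc 0)) [0,1] = reach_within G0 {3} ?P (Suc 0) [0,1,2]"
    by (subst rw1) (simp_all del: reach_within.simps)
  have e3: "reach_within G0 {3} ?P (Suc 0) [0,1,2] = measure_pmf.prob (Pi_pmf {0,1,2} 0 (\<lambda>p. ?P p [0,1,2])) cond"
    by (rule rw2) simp
  have e4: "reach_within G0 {3} ?P (Suc (Suc 0)) [0,2] = measure_pmf.prob (Pi_pmf {0,1,2} 0 (\<lambda>p. ?P p [0,2])) cond"
    by (rule rw2) simp
  have p1: "measure_pmf.prob (Pi_pmf {0,1,2} 0 (\<lambda>p. ?P p [0,1,2])) cond = measure_pmf.prob (\<sigma>O [0,2]) (-{1})"
    using prob_det[of "\<lambda>p. ?P p [0,1,2]" 1] m by (simp add: tm_def)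
  have p2: "measure_pmf.prob (Pi_pmf {0,1,2} 0 (\<lambda>p. ?P p [0,2])) cond = measure_pmf.prob (\<sigma>O [0,2]) (-{0})"
    using prob_det[of "\<lambda>p. ?P p [0,2]" 0] by (simp add: tm_def)
  have "reach_within G0 {3} ?P (Suc (Suc (Suc 0))) [0] = ((1 - pmf (\<sigma>O [0,2]) 1) + (1 - pmf (\<sigma>O [0,2]) 0)) / 2"
    unfolding e1 e2 e3 e4 p1 p2 pc ..
  also have "\<dots> \<ge> 1/2" using pmf_sum_le[of "\<sigma>O [0,2]"] by simp
  finally show ?thesis using rp_ge[of G0 "{3}" ?P "Suc (Suc (Suc 0))" 0] by linarith
qed

lemma arith1: "0 \<le> (u::real) \<Longrightarrow> u \<le> 1 \<Longrightarrow> 0 \<le> v \<Longrightarrow> v \<le> 1 \<Longrightarrow> 1 \<le> u + v \<Longrightarrow> (1-u)*(1-v) \<le> 1/4"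
proof -
  assume a: "0 \<le> u" "u \<le> 1" "0 \<le> v" "v \<le> 1" "1 \<le> u + v"
  have "(1-u)*(1-v) \<le> (1-u)*u" using a by (intro mult_left_mono) auto
  also have "\<dots> \<le> 1/4"
  proof -
    have "0 \<le> (u - 1/2)^2" by simp
    then show ?thesis by (simp add: power2_eq_square algebra_simps)
  qed
  finally show ?thesis .
qed

lemma rhs:
  assumes "memoryless_collective G0 {0,1} \<tau>'"
  shows "(INF \<sigma>O \<in> {\<sigma>. memoryless_strategy G0 2 \<sigma>}. reach_prob G0 {3} (\<tau>'(2 := \<sigma>O)) 0) \<le> 1/4"
proof -
  define u where "u = pmf (\<tau>' 0 [2]) 0"
  define v where "v = pmf (\<tau>' 1 [2]) 0"
  define c :: nat where "c = (if 1 \<le> u + v then 0 else 1)"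
  let ?s = "\<lambda>h::nat list. return_pmf c"
  have S: "?s \<in> {\<sigma>. memoryless_strategy G0 2 \<sigma>}"
    unfolding memoryless_strategy_def memoryless_def is_strategy_def c_def by auto
  have h2: "history G0 [2]" by (simp add: history_def)
  have ml: "\<tau>' p h = \<tau>' p [2]" if "p \<in> {0,1}" "history G0 h" "last h = 2" for p h
  proof -
    have "memoryless G0 (\<tau>' p)" using assms that(1) unfolding memoryless_collective_def memoryless_strategy_def by blast
    then have "\<And>h h'. history G0 h \<Longrightarrow> history G0 h' \<Longrightarrow> last h = last h' \<Longrightarrow> \<tau>' p h = \<tau>' p h'"
      unfolding memoryless_def by blast
    from this[OF that(2) h2] that(3) show ?thesis by simp
  qed
  have sp: "set_pmf (\<tau>' p [2]) \<subseteq> {0,1}" if "p \<in> {0,1}" for p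
  proof -
    have "is_strategy G0 p (\<tau>' p)" using assms that(1) unfolding memoryless_collective_def memoryless_strategy_def by blast
    then have "set_pmf (\<tau>' p [2]) \<subseteq> avail G0 p (last [2])"
      unfolding is_strategy_def using h2 by blast
    then show ?thesis by simp
  qed
  have u1: "pmf (\<tau>' 0 [2]) 1 = 1 - u" using pmf01[OF sp[of 0]] u_def by simp
  have v1: "pmf (\<tau>' 1 [2]) 1 = 1 - v" using pmf01[OF sp[of 1]] v_def by simp
  have uv: "0 \<le> u" "u \<le> 1" "0 \<le> v" "v \<le> 1" unfolding u_def v_def by (simp_all add: pmf_le_1)
  have key: "(1 - pmf (\<tau>' 0 [2]) c) * (1 - pmf (\<tau>' 1 [2]) c) \<le> 1/4"
  proof (cases "1 \<le> u + v")
    case True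
    then show ?thesis using arith1[OF uv True] unfolding c_def u_def v_def by simp
  next
    case False
    then have "(1 - (1-u)) * (1 - (1-v)) \<le> 1/4" using arith1[of "1-u" "1-v"] uv by simp
    then show ?thesis using False u1 v1 unfolding c_def by simp
  qed
  have "reach_within G0 {3} (\<tau>'(2 := ?s)) n [0] \<le> 1/4" for n
  proof (rule rw_from0)
    fix h assume hh: "history G0 h" "last h = 2"
    have "measure_pmf.prob (Pi_pmf {0, 1, 2} 0 (\<lambda>p. (\<tau>'(2 := ?s)) p h)) cond
       \<le> (1 - pmf (\<tau>' 0 h) c) * (1 - pmf (\<tau>' 1 h) c)"
      using prob_bound[of "\<lambda>p. (\<tau>'(2 := ?s)) p h" c] by simp
    also have "\<dots> \<le> 1/4" using key ml[OF _ hh, of 0] ml[OF _ hh, of 1] by simp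
    finally show "measure_pmf.prob (Pi_pmf {0, 1, 2} 0 (\<lambda>p. (\<tau>'(2 := ?s)) p h)) cond \<le> 1/4" .
  qed simp
  then have r: "reach_prob G0 {3} (\<tau>'(2 := ?s)) 0 \<le> 1/4"
    unfolding reach_prob_def by (intro cSUP_least) auto
  have "(INF \<sigma>O \<in> {\<sigma>. memoryless_strategy G0 2 \<sigma>}. reach_prob G0 {3} (\<tau>'(2 := \<sigma>O)) 0)
     \<le> reach_prob G0 {3} (\<tau>'(2 := ?s)) 0"
    by (rule cINF_lower[OF _ S]) (intro bdd_belowI[where m=0], auto simp: rp_nonneg)
  then show ?thesis using r by linarith
qed

theorem theorem2:
  shows "\<exists>G Team T s0 \<tau>.
    wf_game G Team T s0 \<and> collective_strategy G Team \<tau> \<and>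
    (INF \<sigma>O \<in> {\<sigma>. memoryless_strategy G (opponent G Team) \<sigma>}.
        reach_prob G T (\<tau>(opponent G Team := \<sigma>O)) s0)
    > (SUP \<tau>' \<in> {\<tau>'. memoryless_collective G Team \<tau>'}.
        INF \<sigma>O \<in> {\<sigma>. memoryless_strategy G (opponent G Team) \<sigma>}.
          reach_prob G T (\<tau>'(opponent G Team := \<sigma>O)) s0)"
proof (intro exI conjI)
  show "wf_game G0 {0,1} {3} 0" by (rule wf)
  show "collective_strategy G0 {0,1} tm" by (rule coll)
  have ne1: "(\<lambda>h::nat list. return_pmf (0::nat)) \<in> {\<sigma>. memoryless_strategy G0 2 \<sigma>}"
    unfolding memoryless_strategy_def memoryless_def is_strategy_def by auto
  have ne2: "(\<lambda>p (h::nat list). return_pmf (0::nat)) \<in> {\<tau>'. memoryless_collective G0 {0,1} \<tau>'}"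
    unfolding memoryless_collective_def memoryless_strategy_def memoryless_def is_strategy_def by auto
  have L: "1/2 \<le> (INF \<sigma>O \<in> {\<sigma>. memoryless_strategy G0 2 \<sigma>}. reach_prob G0 {3} (tm(2 := \<sigma>O)) 0)"
    by (rule cINF_greatest) (use ne1 in blast, use lhs in blast)
  have R: "(SUP \<tau>' \<in> {\<tau>'. memoryless_collective G0 {0,1} \<tau>'}.
        INF \<sigma>O \<in> {\<sigma>. memoryless_strategy G0 2 \<sigma>}. reach_prob G0 {3} (\<tau>'(2 := \<sigma>O)) 0) \<le> 1/4"
    by (rule cSUP_least) (use ne2 in blast, use rhs in blast)
  show "(INF \<sigma>O \<in> {\<sigma>. memoryless_strategy G0 (opponent G0 {0,1}) \<sigma>}.
        reach_prob G0 {3} (tm(opponent G0 {0,1} := \<sigma>O)) 0)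
    > (SUP \<tau>' \<in> {\<tau>'. memoryless_collective G0 {0,1} \<tau>'}.
        INF \<sigma>O \<in> {\<sigma>. memoryless_strategy G0 (opponent G0 {0,1}) \<sigma>}.
          reach_prob G0 {3} (\<tau>'(opponent G0 {0,1} := \<sigma>O)) 0)"
    unfolding opp using L R by linarith
qed

end
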